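(* Let $T>0$. For $n=0,1,2,\dots$ let $\mathcal{H}_n(x,t)$ denote the two-dimensional Hermite polynomials defined for $t>0$ by $$\mathcal{H}_{n}(x,t)=\frac{(-t)^n}{n!}\,e^{\frac{x^2}{2t}}\frac{d^n}{dx^n}\Big(e^{-\frac{x^2}{2t}}\Big),$$ and $\mathcal{H}_n(x,0)=\frac{x^n}{n!}$ (equivalently, $\mathcal{H}_0=1$, $\mathcal{H}_{-1}=0$, $(n+1)\mathcal{H}_{n+1}(x,t)=x\,\mathcal{H}_n(x,t)-t\,\mathcal{H}_{n-1}(x,t)$; e.g. $\mathcal{H}_1=x$, $\mathcal{H}_2=\frac{x^2}{2}-\frac{t}{2}$). For each $n\ge 0$ let $\{\mathcal{P}_{m,n}(t)\}_{m=0}^{\infty}$ be the family of orthogonal polynomials on $(0,T)$ with respect to the weight $\omega_n(t)=t^n$, where $\mathcal{P}_{m,n}$ has degree $m$, i.e. $\int_0^T t^n\,\mathcal{P}_{r,n}(t)\mathcal{P}_{s,n}(t)\,dt=0$ for $r\neq s$. Then every polynomial in the two variables $t$ and $x$ lies in the linear span of the set $\{\mathcal{P}_{m,n}(t)\,\mathcal{H}_n(x,t)\}_{m,n=0}^{\infty}$.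
   Context: The set $\{\mathcal{P}_{m,n}(t)\mathcal{H}_n(x,t)\}_{m,n\ge 0}$ is orthogonal in the space $\mathbb{L}^2_{\gamma_t}(\mathbb{R}\times[0,T])$ of functions $f(x,t)$ with $\int_0^T\int_{-\infty}^{\infty} f(x,t)^2\gamma_t\,dx\,dt<\infty$, where $\gamma_t=\frac{1}{\sqrt{2\pi t}}e^{-x^2/(2t)}$. *)

theory Defs
  imports "HOL-Analysis.Analysis" "HOL-Computational_Algebra.Polynomial"
begin

fun hermite2 :: "nat \<Rightarrow> real \<Rightarrow> real \<Rightarrow> real" where
  "hermite2 0 x t = 1"
| "hermite2 (Suc 0) x t = x"
| "hermite2 (Suc (Suc n)) x t =
     (x * hermite2 (Suc n) x t - t * hermite2 n x t) / real (n + 2)"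

end

theory Submission
  imports Defs
begin

definition inV :: "(nat \<times> nat \<Rightarrow> real \<Rightarrow> real \<Rightarrow> real) \<Rightarrow> (real \<Rightarrow> real \<Rightarrow> real) \<Rightarrow> bool" where
  "inV g f \<longleftrightarrow> (\<exists>S a. finite S \<and> (\<forall>x t. f x t = (\<Sum>p\<in>S. a p * g p x t)))"

lemma inV_zero: "inV g (\<lambda>x t. 0)"
  unfolding inV_def by (rule exI[of _ "{}"]) auto

lemma inV_gen: "inV g (g p)"
  unfolding inV_def by (rule exI[of _ "{p}"], rule exI[of _ "\<lambda>_. 1"]) auto

lemma inV_scale: "inV g f \<Longrightarrow> inV g (\<lambda>x t. c * f x t)"
  unfolding inV_def
  apply (elim exE conjE)
  subgoal for S a
    by (rule exI[of _ S], rule exI[of _ "\<lambda>p. c * a p"]) (auto simp: sum_distrib_left mult.assoc)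
  done

lemma inV_add:
  assumes "inV g f1" "inV g f2" shows "inV g (\<lambda>x t. f1 x t + f2 x t)"
proof -
  from assms obtain S1 a1 S2 a2 where h: "finite S1" "finite S2"
    "\<And>x t. f1 x t = (\<Sum>p\<in>S1. a1 p * g p x t)" "\<And>x t. f2 x t = (\<Sum>p\<in>S2. a2 p * g p x t)"
    unfolding inV_def by blast
  define a where "a p = (if p \<in> S1 then a1 p else 0) + (if p \<in> S2 then a2 p else 0)" for p
  have "\<forall>x t. f1 x t + f2 x t = (\<Sum>p\<in>S1\<union>S2. a p * g p x t)"
  proof (intro allI)
    fix x t
    have e1: "(\<Sum>p\<in>S1\<union>S2. (if p \<in> S1 then a1 p else 0) * g p x t) = (\<Sum>p\<in>S1. a1 p * g p x t)"
      by (rule sum.mono_neutral_cong_right) (use h in auto)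
    have e2: "(\<Sum>p\<in>S1\<union>S2. (if p \<in> S2 then a2 p else 0) * g p x t) = (\<Sum>p\<in>S2. a2 p * g p x t)"
      by (rule sum.mono_neutral_cong_right) (use h in auto)
    show "f1 x t + f2 x t = (\<Sum>p\<in>S1\<union>S2. a p * g p x t)"
      unfolding a_def distrib_right sum.distrib e1 e2 h(3,4) ..
  qed
  then show ?thesis unfolding inV_def using h by blast
qed

lemma inV_sum: "finite A \<Longrightarrow> (\<And>i. i \<in> A \<Longrightarrow> inV g (f i)) \<Longrightarrow> inV g (\<lambda>x t. \<Sum>i\<in>A. f i x t)"
proof (induction A rule: finite_induct)
  case empty then show ?case using inV_zero by simp
next
  case (insert a A)
  then show ?case using inV_add[of g "f a" "\<lambda>x t. \<Sum>i\<in>A. f i x t"] by simp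
qed

lemma inV_cong: "inV g f \<Longrightarrow> (\<And>x t. f x t = f' x t) \<Longrightarrow> inV g f'"
proof -
  assume "inV g f" "\<And>x t. f x t = f' x t"
  then have "f = f'" by (intro ext) auto
  with \<open>inV g f\<close> show ?thesis by simp
qed

lemma hermite_rec: "x * hermite2 (Suc n) x t = real (n + 2) * hermite2 (Suc (Suc n)) x t + t * hermite2 n x t"
  by simp

context
  fixes P :: "nat \<Rightarrow> nat \<Rightarrow> real poly"
  assumes P_nz: "\<And>m n. P m n \<noteq> 0"
    and P_deg: "\<And>m n. degree (P m n) = m"
begin

definition G :: "nat \<times> nat \<Rightarrow> real \<Rightarrow> real \<Rightarrow> real" where
  "G p x t = poly (P (fst p) (snd p)) t * hermite2 (snd p) x t"

lemma poly_inV: "degree q \<le> d \<Longrightarrow> inV G (\<lambda>x t. poly q t * hermite2 n x t)"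
proof (induction d arbitrary: q)
  case 0
  define c where "c = coeff q 0 / lead_coeff (P 0 n)"
  have lc: "lead_coeff (P 0 n) \<noteq> 0" using P_nz by simp
  have "q = smult c (P 0 n)"
  proof (rule poly_eqI)
    fix k show "coeff q k = coeff (smult c (P 0 n)) k"
    proof (cases k)
      case 0 then show ?thesis using lc P_deg[of 0 n] by (simp add: c_def)
    next
      case (Suc j)
      then have "coeff q k = 0" "coeff (P 0 n) k = 0" using 0 P_deg[of 0 n]
        by (auto intro: coeff_eq_0)
      then show ?thesis by simp
    qed
  qed
  then have "\<And>x t. poly q t * hermite2 n x t = c * G (0, n) x t" by (simp add: G_def)
  then show ?case by (intro inV_cong[OF inV_scale[OF inV_gen[of G "(0,n)"]]]) (simp only:)
next
  case (Suc d)
  define c where "c = coeff q (Suc d) / lead_coeff (P (Suc d) n)"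
  have lc: "lead_coeff (P (Suc d) n) \<noteq> 0" using P_nz by simp
  define q' where "q' = q - smult c (P (Suc d) n)"
  have "degree q' \<le> d"
  proof (rule degree_le)
    show "\<forall>i>d. coeff q' i = 0"
    proof (intro allI impI)
      fix i assume "i > d"
      show "coeff q' i = 0"
      proof (cases "i = Suc d")
        case True then show ?thesis using lc P_deg[of "Suc d" n] by (simp add: q'_def c_def)
      next
        case False
        then have "i > Suc d" using \<open>i > d\<close> by simp
        then have "coeff q i = 0" "coeff (P (Suc d) n) i = 0" using Suc.prems P_deg[of "Suc d" n]
          by (auto intro: coeff_eq_0)
        then show ?thesis by (simp add: q'_def)
      qed
    qed
  qed
  then have h1: "inV G (\<lambda>x t. poly q' t * hermite2 n x t)" by (rule Suc.IH)
  have h2: "inV G (\<lambda>x t. c * G (Suc d, n) x t)" by (rule inV_scale[OF inV_gen])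
  have "\<And>x t. poly q' t * hermite2 n x t + c * G (Suc d, n) x t = poly q t * hermite2 n x t"
    by (simp add: G_def q'_def algebra_simps)
  then show ?case by (intro inV_cong[OF inV_add[OF h1 h2]]) (simp only:)
qed

lemma poly_inV': "inV G (\<lambda>x t. poly q t * hermite2 n x t)"
  using poly_inV by blast

lemma xpow_inV: "inV G (\<lambda>x t. x ^ i * poly q t * hermite2 n x t)"
proof (induction i arbitrary: q n)
  case 0 then show ?case using poly_inV' by simp
next
  case (Suc i)
  show ?case
  proof (cases n)
    case 0
    have "\<And>x t. x ^ i * poly q t * hermite2 1 x t = x ^ Suc i * poly q t * hermite2 n x t"
      using 0 by simp
    then show ?thesis by (intro inV_cong[OF Suc.IH[of q 1]]) (simp only:)
  next
    case (Suc k)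
    have a: "inV G (\<lambda>x t. real (k+2) * (x ^ i * poly q t * hermite2 (Suc (Suc k)) x t))"
      by (rule inV_scale[OF Suc.IH])
    have b: "inV G (\<lambda>x t. x ^ i * poly (q * [:0,1:]) t * hermite2 k x t)"
      by (rule Suc.IH)
    have "\<And>x t. real (k+2) * (x ^ i * poly q t * hermite2 (Suc (Suc k)) x t) +
       x ^ i * poly (q * [:0,1:]) t * hermite2 k x t = x ^ Suc i * poly q t * hermite2 n x t"
    proof -
      fix x t
      have "x ^ Suc i * poly q t * hermite2 n x t = x ^ i * poly q t * (x * hermite2 (Suc k) x t)"
        using Suc by (simp add: algebra_simps)
      also have "\<dots> = x ^ i * poly q t * (real (k + 2) * hermite2 (Suc (Suc k)) x t + t * hermite2 k x t)"
        by (simp only: hermite_rec)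
      finally show "real (k+2) * (x ^ i * poly q t * hermite2 (Suc (Suc k)) x t) +
       x ^ i * poly (q * [:0,1:]) t * hermite2 k x t = x ^ Suc i * poly q t * hermite2 n x t"
        by (simp add: algebra_simps)
    qed
    then show ?thesis by (intro inV_cong[OF inV_add[OF a b]]) (simp only:)
  qed
qed

lemma monom_inV: "inV G (\<lambda>x t. c * x ^ i * t ^ j)"
proof -
  have "inV G (\<lambda>x t. c * (x ^ i * poly (monom 1 j) t * hermite2 0 x t))"
    by (rule inV_scale[OF xpow_inV])
  then show ?thesis by (rule inV_cong) (simp add: poly_monom)
qed

end

theorem theorem2:
  fixes T :: real and P :: "nat \<Rightarrow> nat \<Rightarrow> real poly"
  assumes T_pos: "T > 0"
    and P_nz: "\<And>m n. P m n \<noteq> 0"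
    and P_deg: "\<And>m n. degree (P m n) = m"
    and P_orth: "\<And>r s n. r \<noteq> s \<Longrightarrow>
        integral {0..T} (\<lambda>t. t ^ n * poly (P r n) t * poly (P s n) t) = 0"
  shows "\<forall>(c :: nat \<Rightarrow> nat \<Rightarrow> real) (N :: nat).
           \<exists>(S :: (nat \<times> nat) set) (a :: nat \<Rightarrow> nat \<Rightarrow> real). finite S \<and>
             (\<forall>x t. (\<Sum>i\<le>N. \<Sum>j\<le>N. c i j * x ^ i * t ^ j) =
                    (\<Sum>(m, n)\<in>S. a m n * poly (P m n) t * hermite2 n x t))"
proof (intro allI)
  fix c :: "nat \<Rightarrow> nat \<Rightarrow> real" and N :: nat
  have "inV (G P) (\<lambda>x t. \<Sum>i\<le>N. \<Sum>j\<le>N. c i j * x ^ i * t ^ j)"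
    by (intro inV_sum monom_inV[OF P_nz P_deg]) auto
  then obtain S a where S: "finite S" "\<And>x t. (\<Sum>i\<le>N. \<Sum>j\<le>N. c i j * x ^ i * t ^ j) = (\<Sum>p\<in>S. a p * G P p x t)"
    unfolding inV_def by blast
  show "\<exists>(S :: (nat \<times> nat) set) (a :: nat \<Rightarrow> nat \<Rightarrow> real). finite S \<and>
             (\<forall>x t. (\<Sum>i\<le>N. \<Sum>j\<le>N. c i j * x ^ i * t ^ j) =
                    (\<Sum>(m, n)\<in>S. a m n * poly (P m n) t * hermite2 n x t))"
    by (rule exI[of _ S], rule exI[of _ "\<lambda>m n. a (m, n)"])
       (use S in \<open>auto simp: G_def[OF P_nz P_deg] case_prod_beta mult.assoc\<close>)
qed

end
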